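(* Let $\varphi(u_x,u_y)$, not identically zero, be the generating section of a contact symmetry of the two-dimensional minimal surface equation $(1+u_y^2)u_{xx}-2u_xu_yu_{xy}+(1+u_x^2)u_{yy}=0$, and let $\Sigma=\{z=u(x,y)\}$ be a minimal surface given by a solution $u$ of this equation which is invariant with respect to $\varphi$, i.e. $\varphi(u_x,u_y)=0$ along $u$. Then $\Sigma$ is a plane.
   Context: A contact symmetry of $\{F=0\}$ is given by a generating section $\varphi$ satisfying $\ell_F(\varphi)=0$ on the infinite prolongation of the equation; a solution is invariant with respect to $\varphi$ if $\varphi$ vanishes when evaluated on the solution's jets. *)

theory Defs
  imports "HOL-Analysis.Analysis"
begin

definition dP :: "(real \<times> real \<Rightarrow> real) \<Rightarrow> real \<times> real \<Rightarrow> real" where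
  "dP f z = deriv (\<lambda>t. f (t, snd z)) (fst z)"

definition dQ :: "(real \<times> real \<Rightarrow> real) \<Rightarrow> real \<times> real \<Rightarrow> real" where
  "dQ f z = deriv (\<lambda>t. f (fst z, t)) (snd z)"

text \<open>C-infinity on an open set S of the plane: there is a family D i j of all
  iterated partial derivatives (D 0 0 = f on S), each Frechet differentiable on S
  with the expected partial derivatives.\<close>
definition smooth_on_R2 :: "(real \<times> real) set \<Rightarrow> (real \<times> real \<Rightarrow> real) \<Rightarrow> bool" where
  "smooth_on_R2 S f \<longleftrightarrow>
     (\<exists>D :: nat \<Rightarrow> nat \<Rightarrow> real \<times> real \<Rightarrow> real.
        (\<forall>z\<in>S. D 0 0 z = f z) \<and>
        (\<forall>i j. \<forall>z\<in>S. (D i j has_derivative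
              (\<lambda>(h, k). D (Suc i) j z * h + D i (Suc j) z * k)) (at z)))"

text \<open>Minimal surface equation F(p,q,r,s,t) with p = u_x, q = u_y, r = u_xx, s = u_xy, t = u_yy.\<close>
definition MSE :: "real \<Rightarrow> real \<Rightarrow> real \<Rightarrow> real \<Rightarrow> real \<Rightarrow> real" where
  "MSE p q r s t = (1 + q^2) * r - 2 * p * q * s + (1 + p^2) * t"

text \<open>Total derivatives D_x F and D_y F; a = u_xxx, b = u_xxy, c = u_xyy, d = u_yyy.\<close>
definition DxMSE :: "real \<Rightarrow> real \<Rightarrow> real \<Rightarrow> real \<Rightarrow> real \<Rightarrow> real \<Rightarrow> real \<Rightarrow> real \<Rightarrow> real" where
  "DxMSE p q r s t a b c = 2 * q * s * r + (1 + q^2) * a - 2 * (r * q + p * s) * s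
      - 2 * p * q * b + 2 * p * r * t + (1 + p^2) * c"

definition DyMSE :: "real \<Rightarrow> real \<Rightarrow> real \<Rightarrow> real \<Rightarrow> real \<Rightarrow> real \<Rightarrow> real \<Rightarrow> real \<Rightarrow> real" where
  "DyMSE p q r s t b c d = 2 * q * t * r + (1 + q^2) * b - 2 * (s * q + p * t) * s
      - 2 * p * q * c + 2 * p * s * t + (1 + p^2) * d"

text \<open>The linearization (universal linearization) ell_F applied to the section phi(u_x,u_y),
  written out at a point (p,q,r,s,t,a,b,c,d) of the third-order jet space:
  ell_F(psi) = (1+q^2) D_x^2 psi - 2pq D_x D_y psi + (1+p^2) D_y^2 psi
               + (2pt - 2qs) D_x psi + (2qr - 2ps) D_y psi.\<close>
definition lin_MSE :: "(real \<times> real \<Rightarrow> real) \<Rightarrow> real \<Rightarrow> real \<Rightarrow> real \<Rightarrow> real \<Rightarrow> real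
    \<Rightarrow> real \<Rightarrow> real \<Rightarrow> real \<Rightarrow> real \<Rightarrow> real" where
  "lin_MSE \<phi> p q r s t a b c d =
    (let z = (p, q);
         fp = dP \<phi> z; fq = dQ \<phi> z;
         fpp = dP (dP \<phi>) z; fpq = dQ (dP \<phi>) z; fqq = dQ (dQ \<phi>) z;
         Dx = fp * r + fq * s;
         Dy = fp * s + fq * t;
         Dxx = fpp * r^2 + 2 * fpq * r * s + fqq * s^2 + fp * a + fq * b;
         Dxy = fpp * r * s + fpq * (r * t + s^2) + fqq * s * t + fp * b + fq * c;
         Dyy = fpp * s^2 + 2 * fpq * s * t + fqq * t^2 + fp * c + fq * d
     in (1 + q^2) * Dxx - 2 * p * q * Dxy + (1 + p^2) * Dyy
        + (2 * p * t - 2 * q * s) * Dx + (2 * q * r - 2 * p * s) * Dy)"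

text \<open>phi(u_x,u_y) generates a contact symmetry: ell_F(phi) = 0 on the (order 3 part of the)
  infinite prolongation, i.e. wherever F = D_x F = D_y F = 0.\<close>
definition is_MSE_symmetry :: "(real \<times> real \<Rightarrow> real) \<Rightarrow> bool" where
  "is_MSE_symmetry \<phi> \<longleftrightarrow>
     (\<forall>p q r s t a b c d.
        MSE p q r s t = 0 \<and> DxMSE p q r s t a b c = 0 \<and> DyMSE p q r s t b c d = 0
        \<longrightarrow> lin_MSE \<phi> p q r s t a b c d = 0)"

end

theory Submission
  imports Defs "HOL-Complex_Analysis.Complex_Analysis"
begin

definition fam :: "(real \<times> real) set \<Rightarrow> (real \<times> real \<Rightarrow> real) \<Rightarrow> (nat \<Rightarrow> nat \<Rightarrow> real \<times> real \<Rightarrow> real) \<Rightarrow> bool" where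
  "fam S f D \<longleftrightarrow> (\<forall>z\<in>S. D 0 0 z = f z) \<and>
        (\<forall>i j. \<forall>z\<in>S. (D i j has_derivative (\<lambda>(h, k). D (Suc i) j z * h + D i (Suc j) z * k)) (at z))"

lemma smooth_fam: "smooth_on_R2 S f \<Longrightarrow> \<exists>D. fam S f D"
  unfolding smooth_on_R2_def fam_def by blast

lemma fam_der: "fam S f D \<Longrightarrow> z \<in> S \<Longrightarrow>
   (D i j has_derivative (\<lambda>(h, k). D (Suc i) j z * h + D i (Suc j) z * k)) (at z)"
  unfolding fam_def by blast

lemma fam_chain:
  assumes "fam S f D" "g x \<in> S" "(g has_derivative g') (at x within s)"
  shows "((\<lambda>x. D i j (g x)) has_derivative
      (\<lambda>v. D (Suc i) j (g x) * fst (g' v) + D i (Suc j) (g x) * snd (g' v))) (at x within s)"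
proof -
  have "(D i j has_derivative (\<lambda>(h, k). D (Suc i) j (g x) * h + D i (Suc j) (g x) * k)) (at (g x) within g ` s)"
    using fam_der[OF assms(1,2)] by (rule has_derivative_at_withinI)
  from diff_chain_within[OF assms(3) this] show ?thesis
    by (simp add: o_def case_prod_beta)
qed

lemma fam_partial_x:
  assumes "fam S f D" "open S" "z \<in> S" "\<And>y. y \<in> S \<Longrightarrow> g y = D i j y"
  shows "dP g z = D (Suc i) j z"
proof -
  obtain x y where z: "z = (x, y)" by (cases z)
  have "((\<lambda>t. (t, y)) has_derivative (\<lambda>h. (h, 0))) (at x)"
    by (auto intro!: derivative_eq_intros)
  from fam_chain[OF assms(1) _ this, of i j] assms(3) z
  have "((\<lambda>t. D i j (t, y)) has_derivative (\<lambda>h. D (Suc i) j z * h)) (at x)"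
    by simp
  then have d: "((\<lambda>t. D i j (t, y)) has_field_derivative D (Suc i) j z) (at x)"
    unfolding has_field_derivative_def by assumption
  have "open ((\<lambda>t. (t, y)) -` S)"
    by (rule continuous_open_vimage[OF assms(2)]) (intro continuous_intros)
  then have o: "open {t. (t, y) \<in> S}" by (simp add: vimage_def)
  have "((\<lambda>t. g (t, y)) has_field_derivative D (Suc i) j z) (at x)"
    by (rule has_field_derivative_transform_within_open[OF d o]) (use assms z in auto)
  then show ?thesis unfolding dP_def z by (simp add: DERIV_imp_deriv)
qed

lemma fam_partial_y:
  assumes "fam S f D" "open S" "z \<in> S" "\<And>y. y \<in> S \<Longrightarrow> g y = D i j y"
  shows "dQ g z = D i (Suc j) z"
proof -
  obtain x y where z: "z = (x, y)" by (cases z)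
  have "((\<lambda>t. (x, t)) has_derivative (\<lambda>h. (0, h))) (at y)"
    by (auto intro!: derivative_eq_intros)
  from fam_chain[OF assms(1) _ this, of i j] assms(3) z
  have "((\<lambda>t. D i j (x, t)) has_derivative (\<lambda>h. D i (Suc j) z * h)) (at y)"
    by simp
  then have d: "((\<lambda>t. D i j (x, t)) has_field_derivative D i (Suc j) z) (at y)"
    unfolding has_field_derivative_def by assumption
  have "open ((\<lambda>t. (x, t)) -` S)"
    by (rule continuous_open_vimage[OF assms(2)]) (intro continuous_intros)
  then have o: "open {t. (x, t) \<in> S}" by (simp add: vimage_def)
  have "((\<lambda>t. g (x, t)) has_field_derivative D i (Suc j) z) (at y)"
    by (rule has_field_derivative_transform_within_open[OF d o]) (use assms z in auto)
  then show ?thesis unfolding dQ_def z by (simp add: DERIV_imp_deriv)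
qed

lemma fam_second:
  assumes "fam S f D" "open S" "z \<in> S"
  shows "dP f z = D 1 0 z" "dQ f z = D 0 1 z" "dP (dP f) z = D 2 0 z"
    "dQ (dP f) z = D 1 1 z" "dQ (dQ f) z = D 0 2 z"
proof -
  have f: "\<And>y. y \<in> S \<Longrightarrow> f y = D 0 0 y" using assms(1) unfolding fam_def by auto
  show "dP f z = D 1 0 z" using fam_partial_x[OF assms f] by simp
  show "dQ f z = D 0 1 z" using fam_partial_y[OF assms f] by simp
  have fp: "\<And>y. y \<in> S \<Longrightarrow> dP f y = D 1 0 y" using fam_partial_x[OF assms(1,2) _ f] by simp
  have fq: "\<And>y. y \<in> S \<Longrightarrow> dQ f y = D 0 1 y" using fam_partial_y[OF assms(1,2) _ f] by simp
  show "dP (dP f) z = D 2 0 z" using fam_partial_x[OF assms fp] by (simp add: numeral_2_eq_2)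
  show "dQ (dP f) z = D 1 1 z" using fam_partial_y[OF assms fp] by simp
  show "dQ (dQ f) z = D 0 2 z" using fam_partial_y[OF assms fq] by (simp add: numeral_2_eq_2)
qed

lemma sym_L:
  assumes "fam UNIV \<phi> F" "is_MSE_symmetry \<phi>"
  shows "(1 + p^2) * F 2 0 (p, q) + 2 * p * q * F 1 1 (p, q) + (1 + q^2) * F 0 2 (p, q) = 0"
proof -
  let ?A = "1 + q^2" and ?P = "1 + p^2"
  note e = fam_second[OF assms(1) open_UNIV UNIV_I, of "(p,q)"]
  have h: "lin_MSE \<phi> p q ?P 0 (- ?A) (2*p*?P) 0 0 (2*q*?A) = 0"
  proof -
    have "MSE p q ?P 0 (- ?A) = 0" "DxMSE p q ?P 0 (- ?A) (2*p*?P) 0 0 = 0"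
       "DyMSE p q ?P 0 (- ?A) 0 0 (2*q*?A) = 0"
      unfolding MSE_def DxMSE_def DyMSE_def by (simp_all add: algebra_simps)
    then show ?thesis using assms(2) unfolding is_MSE_symmetry_def by blast
  qed
  have "lin_MSE \<phi> p q ?P 0 (- ?A) (2*p*?P) 0 0 (2*q*?A) =
      ?A * ?P * ((1 + p^2) * F 2 0 (p, q) + 2 * p * q * F 1 1 (p, q) + (1 + q^2) * F 0 2 (p, q))"
    unfolding lin_MSE_def Let_def e by (simp add: algebra_simps power2_eq_square)
  with h have "?A * ?P * ((1 + p^2) * F 2 0 (p, q) + 2 * p * q * F 1 1 (p, q) + (1 + q^2) * F 0 2 (p, q)) = 0"
    by simp
  moreover have "?A * ?P \<noteq> 0" by (smt (verit) mult_pos_pos zero_le_power2)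
  ultimately show ?thesis by simp
qed

definition wd :: "(complex \<Rightarrow> complex) \<Rightarrow> complex \<Rightarrow> complex \<Rightarrow> bool" where
  "wd f w c \<longleftrightarrow> (\<exists>f'. (f has_derivative f') (at w) \<and> f' 1 + \<i> * f' \<i> = 2 * c)"

lemma wd_const: "wd (\<lambda>z. k) w 0"
  unfolding wd_def by (rule exI[of _ "\<lambda>h. 0"]) (simp add: has_derivative_const)

lemma wd_id: "wd (\<lambda>z. z) w 0"
  unfolding wd_def by (rule exI[of _ "\<lambda>h. h"]) (simp add: has_derivative_ident)

lemma wd_cnj: "wd (\<lambda>z. cnj z) w 1"
  unfolding wd_def by (rule exI[of _ "\<lambda>h. cnj h"]) (simp add: has_derivative_cnj[OF has_derivative_ident])

lemma wd_add: assumes "wd f w a" "wd g w b" "c = a + b" shows "wd (\<lambda>z. f z + g z) w c"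
proof -
  obtain f' where f: "(f has_derivative f') (at w)" "f' 1 + \<i> * f' \<i> = 2 * a" using assms(1) wd_def by auto
  obtain g' where g: "(g has_derivative g') (at w)" "g' 1 + \<i> * g' \<i> = 2 * b" using assms(2) wd_def by auto
  have "((\<lambda>z. f z + g z) has_derivative (\<lambda>h. f' h + g' h)) (at w)" by (rule has_derivative_add[OF f(1) g(1)])
  moreover have "(f' 1 + g' 1) + \<i> * (f' \<i> + g' \<i>) = 2 * c"
  proof -
    have "(f' 1 + g' 1) + \<i> * (f' \<i> + g' \<i>) = (f' 1 + \<i> * f' \<i>) + (g' 1 + \<i> * g' \<i>)" by (simp add: algebra_simps)
    then show ?thesis using f g assms(3) by (simp add: algebra_simps)
  qed
  ultimately show ?thesis unfolding wd_def by blast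
qed

lemma wd_diff: assumes "wd f w a" "wd g w b" "c = a - b" shows "wd (\<lambda>z. f z - g z) w c"
proof -
  obtain f' where f: "(f has_derivative f') (at w)" "f' 1 + \<i> * f' \<i> = 2 * a" using assms(1) wd_def by auto
  obtain g' where g: "(g has_derivative g') (at w)" "g' 1 + \<i> * g' \<i> = 2 * b" using assms(2) wd_def by auto
  have "((\<lambda>z. f z - g z) has_derivative (\<lambda>h. f' h - g' h)) (at w)" by (rule has_derivative_diff[OF f(1) g(1)])
  moreover have "(f' 1 - g' 1) + \<i> * (f' \<i> - g' \<i>) = 2 * c"
  proof -
    have "(f' 1 - g' 1) + \<i> * (f' \<i> - g' \<i>) = (f' 1 + \<i> * f' \<i>) - (g' 1 + \<i> * g' \<i>)" by (simp add: algebra_simps)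
    then show ?thesis using f(2) g(2) assms(3) by (simp add: right_diff_distrib)
  qed
  ultimately show ?thesis unfolding wd_def by blast
qed

lemma wd_minus: assumes "wd f w a" "c = - a" shows "wd (\<lambda>z. - f z) w c"
proof -
  obtain f' where f: "(f has_derivative f') (at w)" "f' 1 + \<i> * f' \<i> = 2 * a" using assms(1) wd_def by auto
  have "((\<lambda>z. - f z) has_derivative (\<lambda>h. - f' h)) (at w)" by (rule has_derivative_minus[OF f(1)])
  moreover have "(- f' 1) + \<i> * (- f' \<i>) = 2 * c"
  proof -
    have "(- f' 1) + \<i> * (- f' \<i>) = - (f' 1 + \<i> * f' \<i>)" by (simp add: algebra_simps)
    then show ?thesis using f assms(2) by (simp add: algebra_simps)
  qed
  ultimately show ?thesis unfolding wd_def by blast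
qed

lemma wd_mult: assumes "wd f w a" "wd g w b" "c = f w * b + a * g w" shows "wd (\<lambda>z. f z * g z) w c"
proof -
  obtain f' where f: "(f has_derivative f') (at w)" "f' 1 + \<i> * f' \<i> = 2 * a" using assms(1) wd_def by auto
  obtain g' where g: "(g has_derivative g') (at w)" "g' 1 + \<i> * g' \<i> = 2 * b" using assms(2) wd_def by auto
  have "((\<lambda>z. f z * g z) has_derivative (\<lambda>h. f w * g' h + f' h * g w)) (at w)" by (rule has_derivative_mult[OF f(1) g(1)])
  moreover have "(f w * g' 1 + f' 1 * g w) + \<i> * (f w * g' \<i> + f' \<i> * g w) = 2 * c"
  proof -
    have "(f w * g' 1 + f' 1 * g w) + \<i> * (f w * g' \<i> + f' \<i> * g w) = f w * (g' 1 + \<i> * g' \<i>) + (f' 1 + \<i> * f' \<i>) * g w" by (simp add: algebra_simps)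
    then show ?thesis using f g assms(3) by (simp add: algebra_simps)
  qed
  ultimately show ?thesis unfolding wd_def by blast
qed

lemma wd_inverse: "wd g w b \<Longrightarrow> g w \<noteq> 0 \<Longrightarrow> c = - b / (g w)^2 \<Longrightarrow> wd (\<lambda>z. inverse (g z)) w c"
  unfolding wd_def
proof (elim exE conjE)
  fix g' assume d: "(g has_derivative g') (at w)" and e: "g' 1 + \<i> * g' \<i> = 2 * b" and nz: "g w \<noteq> 0"
    and c: "c = - b / (g w)^2"
  show "\<exists>f'. ((\<lambda>z. inverse (g z)) has_derivative f') (at w) \<and> f' 1 + \<i> * f' \<i> = 2 * c"
  proof (intro exI conjI)
    show "((\<lambda>z. inverse (g z)) has_derivative (\<lambda>h. - (inverse (g w) * g' h * inverse (g w)))) (at w)"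
      by (rule Deriv.has_derivative_inverse[OF nz d])
    have "- (inverse (g w) * g' 1 * inverse (g w)) + \<i> * - (inverse (g w) * g' \<i> * inverse (g w))
        = - (g' 1 + \<i> * g' \<i>) / (g w)^2"
      using nz by (simp add: field_simps power2_eq_square)
    then show "- (inverse (g w) * g' 1 * inverse (g w)) + \<i> * - (inverse (g w) * g' \<i> * inverse (g w)) = 2 * c"
      using e c by simp
  qed
qed

lemma wd_power: assumes "wd f w a" "c = of_nat n * f w ^ (n - 1) * a" shows "wd (\<lambda>z. f z ^ n) w c"
proof -
  obtain f' where f: "(f has_derivative f') (at w)" "f' 1 + \<i> * f' \<i> = 2 * a" using assms(1) wd_def by auto
  have "((\<lambda>z. f z ^ n) has_derivative (\<lambda>h. of_nat n * f' h * f w ^ (n - 1))) (at w)" by (rule has_derivative_power[OF f(1)])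
  moreover have "(of_nat n * f' 1 * f w ^ (n - 1)) + \<i> * (of_nat n * f' \<i> * f w ^ (n - 1)) = 2 * c"
  proof -
    have "(of_nat n * f' 1 * f w ^ (n - 1)) + \<i> * (of_nat n * f' \<i> * f w ^ (n - 1)) = of_nat n * f w ^ (n - 1) * (f' 1 + \<i> * f' \<i>)" by (simp add: algebra_simps)
    then show ?thesis using f assms(2) by (simp add: algebra_simps)
  qed
  ultimately show ?thesis unfolding wd_def by blast
qed

lemma wd_of_real: assumes "(\<psi> has_derivative \<psi>') (at w)" "c = (of_real (\<psi>' 1) + \<i> * of_real (\<psi>' \<i>)) / 2"
  shows "wd (\<lambda>z. of_real (\<psi> z)) w c"
proof -
  have "((\<lambda>z. complex_of_real (\<psi> z)) has_derivative (\<lambda>h. of_real (\<psi>' h))) (at w)"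
    using has_derivative_of_real[OF assms(1)] .
  moreover have "complex_of_real (\<psi>' 1) + \<i> * of_real (\<psi>' \<i>) = 2 * c" unfolding assms(2) by simp
  ultimately show ?thesis unfolding wd_def by blast
qed

lemma lin_complex:
  assumes "linear f'"
  shows "f' h = of_real (Re h) *\<^sub>R f' 1 + of_real (Im h) *\<^sub>R f' \<i>"
proof -
  have hh: "Re h *\<^sub>R 1 + Im h *\<^sub>R \<i> = h" by (simp add: complex_eq_iff)
  have "f' h = f' (Re h *\<^sub>R 1 + Im h *\<^sub>R \<i>)" unfolding hh ..
  also have "\<dots> = Re h *\<^sub>R f' 1 + Im h *\<^sub>R f' \<i>"
    using assms by (simp add: linear_add linear_scale)
  finally show ?thesis by simp
qed

lemma wd_holo: assumes "wd f w 0" shows "f field_differentiable (at w)"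
proof -
  obtain f' where d: "(f has_derivative f') (at w)" and e: "f' 1 + \<i> * f' \<i> = 0"
    using assms unfolding wd_def by auto
  have lin: "linear f'" using d has_derivative_linear by blast
  have i: "f' \<i> = \<i> * f' 1"
  proof -
    have "\<i> * (f' 1 + \<i> * f' \<i>) = 0" using e by simp
    then show ?thesis by (simp add: algebra_simps)
  qed
  have fh: "f' h = f' 1 * h" for h
  proof -
    have hh: "of_real (Re h) + \<i> * of_real (Im h) = h" by (simp add: complex_eq_iff)
    have "f' h = Re h *\<^sub>R f' 1 + Im h *\<^sub>R f' \<i>" using lin_complex[OF lin, of h] by simp
    then have "f' h = (of_real (Re h) + \<i> * of_real (Im h)) * f' 1"
      unfolding i by (simp add: scaleR_conv_of_real algebra_simps)
    then show ?thesis unfolding hh by (simp add: mult.commute)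
  qed
  have "(f has_derivative (\<lambda>h. f' 1 * h)) (at w)"
    by (rule has_derivative_eq_rhs[OF d]) (rule ext, rule fh)
  then have "(f has_field_derivative f' 1) (at w)" unfolding has_field_derivative_def by simp
  then show ?thesis unfolding field_differentiable_def by blast
qed

lemma wd_real_zero:
  assumes d: "(\<psi> has_derivative \<psi>') (at w)" and z: "wd (\<lambda>z. of_real (\<psi> z)) w 0"
  shows "\<psi>' h = 0"
proof -
  obtain f' where d2: "((\<lambda>z. complex_of_real (\<psi> z)) has_derivative f') (at w)" and e: "f' 1 + \<i> * f' \<i> = 0"
    using z unfolding wd_def by auto
  have d3: "((\<lambda>z. complex_of_real (\<psi> z)) has_derivative (\<lambda>h. of_real (\<psi>' h))) (at w)"
    using has_derivative_of_real[OF d] .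
  have "f' = (\<lambda>h. of_real (\<psi>' h))" using has_derivative_unique[OF d2 d3] .
  with e have "of_real (\<psi>' 1) + \<i> * of_real (\<psi>' \<i>) = (0::complex)" by simp
  then have a: "\<psi>' 1 = 0" and b: "\<psi>' \<i> = 0" by (simp_all add: complex_eq_iff)
  have lin: "linear \<psi>'" using d has_derivative_linear by blast
  have hh: "Re h *\<^sub>R 1 + Im h *\<^sub>R \<i> = h" by (simp add: complex_eq_iff)
  have "\<psi>' h = \<psi>' (Re h *\<^sub>R 1 + Im h *\<^sub>R \<i>)" unfolding hh ..
  also have "\<dots> = Re h *\<^sub>R \<psi>' 1 + Im h *\<^sub>R \<psi>' \<i>"
    using lin by (simp add: linear_add linear_scale)
  finally show ?thesis using a b by simp
qed

definition Dr :: "complex \<Rightarrow> real" where "Dr w = 1 - (Re w)^2 - (Im w)^2"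
definition Pmap :: "complex \<Rightarrow> real \<times> real" where "Pmap w = (2 * Re w / Dr w, 2 * Im w / Dr w)"

lemma Dr_pos: "w \<in> ball 0 1 \<Longrightarrow> Dr w > 0"
proof -
  assume "w \<in> ball 0 1"
  then have "cmod w < 1" by simp
  then have "(cmod w)^2 < 1" by (simp add: power_less_one_iff abs_square_less_1)
  then show ?thesis unfolding Dr_def cmod_power2 by simp
qed

lemma Dr_cnj: "complex_of_real (Dr w) = 1 - w * cnj w"
  by (simp add: complex_eq_iff Dr_def power2_eq_square)

lemma Pm_deriv:
  assumes "Dr w \<noteq> 0"
  shows "(Pmap has_derivative (\<lambda>v::complex. ((2 * Re v * Dr w + 4 * Re w * (Re w* Re v + Im w * Im v)) / (Dr w)^2,
                                    (2 * Im v * Dr w + 4 * Im w * (Re w* Re v + Im w * Im v)) / (Dr w)^2))) (at w)"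
proof -
  have e: "Pmap = (\<lambda>z. (2 * Re z / (1 - (Re z)^2 - (Im z)^2), 2 * Im z / (1 - (Re z)^2 - (Im z)^2)))"
    by (simp add: fun_eq_iff Pmap_def Dr_def)
  show ?thesis unfolding e
    using assms unfolding Dr_def
    by (auto intro!: derivative_eq_intros simp: field_simps power2_eq_square)
qed

lemma wd_F:
  assumes F: "fam UNIV \<phi> F" and w: "Dr w \<noteq> 0"
  shows "wd (\<lambda>z. complex_of_real (F i j (Pmap z))) w
     (of_real (F (Suc i) j (Pmap w)) * ((1 + w^2) / (of_real (Dr w))^2)
      + of_real (F i (Suc j) (Pmap w)) * (\<i> * (1 - w^2) / (of_real (Dr w))^2))"
proof -
  obtain x y where xy: "w = Complex x y" by (metis complex.collapse)
  have d: "1 - x^2 - y^2 \<noteq> 0" using w unfolding Dr_def xy by simp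
  show ?thesis
    apply (rule wd_of_real[OF fam_chain[OF F UNIV_I Pm_deriv[OF w]]])
    using w unfolding complex_eq_iff
    apply (simp del: of_real_power add: of_real_power[symmetric] Re_divide_of_real Im_divide_of_real)
    unfolding xy Dr_def using d
    apply (simp add: field_simps power2_eq_square)
    done
qed

definition Hf :: "(nat \<Rightarrow> nat \<Rightarrow> real \<times> real \<Rightarrow> real) \<Rightarrow> complex \<Rightarrow> complex" where
 "Hf F z = ((of_real (F 2 0 (Pmap z)) - of_real (F 0 2 (Pmap z)) - 2 * \<i> * of_real (F 1 1 (Pmap z)))
    + 2 * (cnj z)^2 * (of_real (F 2 0 (Pmap z)) + of_real (F 0 2 (Pmap z)))
    + (cnj z)^4 * (of_real (F 2 0 (Pmap z)) - of_real (F 0 2 (Pmap z)) + 2 * \<i> * of_real (F 1 1 (Pmap z))))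
   * inverse ((1 - z * cnj z)^3 * (1 + z * cnj z))"

lemma Dc_nz: "w \<in> ball 0 1 \<Longrightarrow> 1 - w * cnj w \<noteq> 0"
  using Dr_pos[of w] Dr_cnj[of w] by (metis less_irrefl of_real_eq_0_iff)

lemma Ec_nz: "1 + w * cnj w \<noteq> 0"
proof
  assume "1 + w * cnj w = 0"
  then have "Re (1 + w * cnj w) = 0" by simp
  then have "1 + (Re w)^2 + (Im w)^2 = 0" by (simp add: power2_eq_square)
  then show False by (smt (verit) zero_le_power2)
qed

lemma cpq:
  assumes "Dr w \<noteq> 0" "Pmap w = (p, q)"
  shows "complex_of_real p * (1 - w * cnj w) = w + cnj w"
    and "complex_of_real q * (1 - w * cnj w) = - \<i> * (w - cnj w)"
proof -
  have p: "p = 2 * Re w / Dr w" and q: "q = 2 * Im w / Dr w" using assms(2) unfolding Pmap_def by auto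
  have e: "1 - w * cnj w = complex_of_real (Dr w)" by (simp add: Dr_cnj)
  show "complex_of_real p * (1 - w * cnj w) = w + cnj w"
    unfolding e p using assms(1) by (simp add: complex_add_cnj)
  show "complex_of_real q * (1 - w * cnj w) = - \<i> * (w - cnj w)"
    unfolding e q using assms(1) by (simp add: complex_eq_iff)
qed

lemma core1_E:
  fixes w v f20 f11 f02 f30 f21 f12 f03 :: complex
  assumes Dc: "1 - w * v \<noteq> 0" and Ec: "1 + w * v \<noteq> 0"
  and l0: "((1 - w * v)^2 + (w + v)^2) * f20 + 2 * (w + v) * (- \<i> * (w - v)) * f11 + ((1 - w * v)^2 + (- \<i> * (w - v))^2) * f02 = 0"
  and lp: "2 * (w + v) * (1 - w * v) * f20 + ((1 - w * v)^2 + (w + v)^2) * f30 + 2 * (- \<i> * (w - v)) * (1 - w * v) * f11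
      + 2 * (w + v) * (- \<i> * (w - v)) * f21 + ((1 - w * v)^2 + (- \<i> * (w - v))^2) * f12 = 0"
  and lq: "((1 - w * v)^2 + (w + v)^2) * f21 + 2 * (w + v) * (1 - w * v) * f11 + 2 * (w + v) * (- \<i> * (w - v)) * f12
      + 2 * (- \<i> * (w - v)) * (1 - w * v) * f02 + ((1 - w * v)^2 + (- \<i> * (w - v))^2) * f03 = 0"
  shows "0 = ( (f20 - f02 - 2 * \<i> * f11 + 2 * v\<^sup>2 * (f20 + f02) + v ^ 4 * (f20 - f02 + 2 * \<i> * f11)) * (- ((1 - w * v) ^ 3 * (0 + (w * 1 + 0 * v)) + complex_of_nat 3 * (1 - w * v) ^ (3 - 1) * (0 - (w * 1 + 0 * v)) * (1 + w * v)) / ((1 - w * v) ^ 3 * (1 + w * v))\<^sup>2) + (f30 * ((1 + w\<^sup>2) / (1 - w * v)\<^sup>2) + f21 * (\<i> * (1 - w\<^sup>2) / (1 - w * v)\<^sup>2) - (f12 * ((1 + w\<^sup>2) / (1 - w * v)\<^sup>2) + f03 * (\<i> * (1 - w\<^sup>2) / (1 - w * v)\<^sup>2)) - (2 * \<i> * (f21 * ((1 + w\<^sup>2) / (1 - w * v)\<^sup>2) + f12 * (\<i> * (1 - w\<^sup>2) / (1 - w * v)\<^sup>2)) + (2 * 0 + 0 * \<i>) * f11) + (2 * v\<^sup>2 * (f30 * ((1 + w\<^sup>2) / (1 - w * v)\<^sup>2) + f21 * (\<i> * (1 - w\<^sup>2) / (1 - w * v)\<^sup>2) + (f12 * ((1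 + w\<^sup>2) / (1 - w * v)\<^sup>2) + f03 * (\<i> * (1 - w\<^sup>2) / (1 - w * v)\<^sup>2))) + (2 * (complex_of_nat 2 * v ^ (2 - 1) * 1) + 0 * v\<^sup>2) * (f20 + f02)) + (v ^ 4 * (f30 * ((1 + w\<^sup>2) / (1 - w * v)\<^sup>2) + f21 * (\<i> * (1 - w\<^sup>2) / (1 - w * v)\<^sup>2) - (f12 * ((1 + w\<^sup>2) / (1 - w * v)\<^sup>2) + f03 * (\<i> * (1 - w\<^sup>2) / (1 - w * v)\<^sup>2)) + (2 * \<i> * (f21 * ((1 + w\<^sup>2) / (1 - w * v)\<^sup>2) + f12 * (\<i> * (1 - w\<^sup>2) / (1 - w * v)\<^sup>2)) + (2 * 0 + 0 * \<i>) * f11)) + complex_of_nat 4 * v ^ (4 - 1) * 1 * (f20 - f02 + 2 * \<i> * f11))) * inverse ((1 - w * v) ^ 3 * (1 + w * v)))"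
proof -
  have i2: "\<i>^2 = -1" by simp
  have T: "((f30 * (1 + w^2) + f21 * \<i> * (1 - w^2)) - (f12 * (1 + w^2) + f03 * \<i> * (1 - w^2))
          - 2 * \<i> * (f21 * (1 + w^2) + f12 * \<i> * (1 - w^2))
          + 2 * v^2 * ((f30 * (1 + w^2) + f21 * \<i> * (1 - w^2)) + (f12 * (1 + w^2) + f03 * \<i> * (1 - w^2)))
          + v^4 * ((f30 * (1 + w^2) + f21 * \<i> * (1 - w^2)) - (f12 * (1 + w^2) + f03 * \<i> * (1 - w^2))
                   + 2 * \<i> * (f21 * (1 + w^2) + f12 * \<i> * (1 - w^2)))
          + (1 - w * v)^2 * (4 * v * (f20 + f02) + 4 * v^3 * (f20 - f02 + 2 * \<i> * f11))) * (1 + w * v)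
        - ((f20 - f02 - 2 * \<i> * f11) + 2 * v^2 * (f20 + f02) + v^4 * (f20 - f02 + 2 * \<i> * f11))
          * (1 - w * v) * (- 3 * w * (1 + w * v) + (1 - w * v) * w) = 0" (is "?T = 0")
  proof -
    have "?T = 2 * v * (1 - w * v) * (((1 - w * v)^2 + (w + v)^2) * f20 + 2 * (w + v) * (- \<i> * (w - v)) * f11 + ((1 - w * v)^2 + (- \<i> * (w - v))^2) * f02)
       + (1 + v^2) * (1 + w * v) * (2 * (w + v) * (1 - w * v) * f20 + ((1 - w * v)^2 + (w + v)^2) * f30 + 2 * (- \<i> * (w - v)) * (1 - w * v) * f11
      + 2 * (w + v) * (- \<i> * (w - v)) * f21 + ((1 - w * v)^2 + (- \<i> * (w - v))^2) * f12)
       - \<i> * (1 - v^2) * (1 + w * v) * (((1 - w * v)^2 + (w + v)^2) * f21 + 2 * (w + v) * (1 - w * v) * f11 + 2 * (w + v) * (- \<i> * (w - v)) * f12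
      + 2 * (- \<i> * (w - v)) * (1 - w * v) * f02 + ((1 - w * v)^2 + (- \<i> * (w - v))^2) * f03)"
      using i2 by algebra
    then show ?thesis using l0 lp lq by simp
  qed
  define P where "P = (1 + w\<^sup>2) / (1 - w * v)\<^sup>2"
  define Q where "Q = \<i> * (1 - w\<^sup>2) / (1 - w * v)\<^sup>2"
  define S where "S = - ((1 - w * v) ^ 3 * (0 + (w * 1 + 0 * v)) +
         complex_of_nat 3 * (1 - w * v) ^ (3 - 1) * (0 - (w * 1 + 0 * v)) *
         (1 + w * v)) /
      ((1 - w * v) ^ 3 * (1 + w * v))\<^sup>2"
  define R where "R = inverse ((1 - w * v) ^ 3 * (1 + w * v))"
  have hP: "P * (1 - w * v)^2 = 1 + w^2" unfolding P_def using Dc by simp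
  have hQ: "Q * (1 - w * v)^2 = \<i> * (1 - w^2)" unfolding Q_def using Dc by simp
  have nz: "(1 - w * v) ^ 3 * (1 + w * v) \<noteq> 0" using Dc Ec by simp
  have hR: "R * ((1 - w * v) ^ 3 * (1 + w * v)) = 1" unfolding R_def by (rule left_inverse[OF nz])
  have hS: "S * ((1 - w * v) ^ 3 * (1 + w * v))^2 = - ((1 - w * v) ^ 3 * w - 3 * (1 - w * v) ^ 2 * w * (1 + w * v))"
    unfolding S_def using Dc Ec by (simp add: numeral_3_eq_3 power2_eq_square)
  have aux: "(2::nat) - 1 = 1" "(4::nat) - 1 = 3" "complex_of_nat 2 = 2" "complex_of_nat 4 = 4" by simp_all
  have EE: "( (f20 - f02 - 2 * \<i> * f11 + 2 * v\<^sup>2 * (f20 + f02) + v ^ 4 * (f20 - f02 + 2 * \<i> * f11)) * (- ((1 - w * v) ^ 3 * (0 + (w * 1 + 0 * v)) + complex_of_nat 3 * (1 - w * v) ^ (3 - 1) * (0 - (w * 1 + 0 * v)) * (1 + w * v)) / ((1 - w * v) ^ 3 * (1 + w * v))\<^sup>2) + (f30 * ((1 + w\<^sup>2) / (1 - w * v)\<^sup>2) + f21 * (\<i> * (1 - w\<^sup>2) / (1 - w * v)\<^sup>2) - (f12 * ((1 + w\<^sup>2) / (1 - w * v)\<^sup>2) + f03 * (\<i> * (1 - w\<^sup>2) / (1 - w * v)\<^sup>2)) - (2 * \<i> * (f21 * ((1 + w\<^sup>2) / (1 - w * v)\<^sup>2) + f12 * (\<i> * (1 - w\<^sup>2) / (1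 - w * v)\<^sup>2)) + (2 * 0 + 0 * \<i>) * f11) + (2 * v\<^sup>2 * (f30 * ((1 + w\<^sup>2) / (1 - w * v)\<^sup>2) + f21 * (\<i> * (1 - w\<^sup>2) / (1 - w * v)\<^sup>2) + (f12 * ((1 + w\<^sup>2) / (1 - w * v)\<^sup>2) + f03 * (\<i> * (1 - w\<^sup>2) / (1 - w * v)\<^sup>2))) + (2 * (complex_of_nat 2 * v ^ (2 - 1) * 1) + 0 * v\<^sup>2) * (f20 + f02)) + (v ^ 4 * (f30 * ((1 + w\<^sup>2) / (1 - w * v)\<^sup>2) + f21 * (\<i> * (1 - w\<^sup>2) / (1 - w * v)\<^sup>2) - (f12 * ((1 + w\<^sup>2) / (1 - w * v)\<^sup>2) + f03 * (\<i> * (1 - w\<^sup>2) / (1 - w * v)\<^sup>2)) + (2 * \<i> * (f21 * ((1 + w\<^sup>2) / (1 - w * v)\<^sup>2) + f12 * (\<i> * (1 - w\<^sup>2) / (1 - w * v)\<^sup>2)) + (2 * 0 + 0 * \<i>) * f11)) + complex_of_nat 4 * v ^ (4 - 1) * 1 * (f20 - f02 + 2 * \<i> * f11))) * inverse ((1 - w * v) ^ 3 * (1 + w * v))) * ((1 - w * v) ^ 3 * (1 + w * v))^2 = (1 - w * v) * ?T"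
    unfolding P_def[symmetric] Q_def[symmetric] R_def[symmetric] S_def[symmetric] aux power_one_right
    using hP hQ hR hS i2 by algebra
  have "( (f20 - f02 - 2 * \<i> * f11 + 2 * v\<^sup>2 * (f20 + f02) + v ^ 4 * (f20 - f02 + 2 * \<i> * f11)) * (- ((1 - w * v) ^ 3 * (0 + (w * 1 + 0 * v)) + complex_of_nat 3 * (1 - w * v) ^ (3 - 1) * (0 - (w * 1 + 0 * v)) * (1 + w * v)) / ((1 - w * v) ^ 3 * (1 + w * v))\<^sup>2) + (f30 * ((1 + w\<^sup>2) / (1 - w * v)\<^sup>2) + f21 * (\<i> * (1 - w\<^sup>2) / (1 - w * v)\<^sup>2) - (f12 * ((1 + w\<^sup>2) / (1 - w * v)\<^sup>2) + f03 * (\<i> * (1 - w\<^sup>2) / (1 - w * v)\<^sup>2)) - (2 * \<i> * (f21 * ((1 + w\<^sup>2) / (1 - w * v)\<^sup>2) + f12 * (\<i> * (1 - w\<^sup>2) / (1 - w * v)\<^sup>2)) + (2 * 0 + 0 * \<i>) * f11) + (2 * v\<^sup>2 * (f30 * ((1 + w\<^sup>2) / (1 - w * v)\<^sup>2) + f21 * (\<i> * (1 - w\<^sup>2) / (1 - w * v)\<^sup>2) + (f12 * ((1 + w\<^sup>2) / (1 - w * v)\<^sup>2) + f03 * (\<i> * (1 - w\<^sup>2) / (1 - w * v)\<^sup>2))) + (2 * (complex_of_nat 2 * v ^ (2 - 1) * 1) + 0 * v\<^sup>2) * (f20 + f02)) + (v ^ 4 * (f30 * ((1 + w\<^sup>2)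 / (1 - w * v)\<^sup>2) + f21 * (\<i> * (1 - w\<^sup>2) / (1 - w * v)\<^sup>2) - (f12 * ((1 + w\<^sup>2) / (1 - w * v)\<^sup>2) + f03 * (\<i> * (1 - w\<^sup>2) / (1 - w * v)\<^sup>2)) + (2 * \<i> * (f21 * ((1 + w\<^sup>2) / (1 - w * v)\<^sup>2) + f12 * (\<i> * (1 - w\<^sup>2) / (1 - w * v)\<^sup>2)) + (2 * 0 + 0 * \<i>) * f11)) + complex_of_nat 4 * v ^ (4 - 1) * 1 * (f20 - f02 + 2 * \<i> * f11))) * inverse ((1 - w * v) ^ 3 * (1 + w * v))) = 0" using EE T Dc Ec by simp
  then show ?thesis by simp
qed


lemma Hf_wd:
  assumes F: "fam UNIV \<phi> F" and w: "w \<in> ball 0 1"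
    and L0: "\<And>p q. (1 + p^2) * F 2 0 (p, q) + 2 * p * q * F 1 1 (p, q) + (1 + q^2) * F 0 2 (p, q) = 0"
    and Lp: "\<And>p q. 2 * p * F 2 0 (p, q) + (1 + p^2) * F 3 0 (p, q) + 2 * q * F 1 1 (p, q)
              + 2 * p * q * F 2 1 (p, q) + (1 + q^2) * F 1 2 (p, q) = 0"
    and Lq: "\<And>p q. (1 + p^2) * F 2 1 (p, q) + 2 * p * F 1 1 (p, q) + 2 * p * q * F 1 2 (p, q)
              + 2 * q * F 0 2 (p, q) + (1 + q^2) * F 0 3 (p, q) = 0"
  shows "wd (Hf F) w 0"
proof -
  have Dw: "Dr w \<noteq> 0" using Dr_pos[OF w] by simp
  obtain p q where pq: "Pmap w = (p, q)" by (cases "Pmap w")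
  define v where "v = cnj w"
  define f20 where "f20 = complex_of_real (F 2 0 (p, q))"
  define f11 where "f11 = complex_of_real (F 1 1 (p, q))"
  define f02 where "f02 = complex_of_real (F 0 2 (p, q))"
  define f30 where "f30 = complex_of_real (F 3 0 (p, q))"
  define f21 where "f21 = complex_of_real (F 2 1 (p, q))"
  define f12 where "f12 = complex_of_real (F 1 2 (p, q))"
  define f03 where "f03 = complex_of_real (F 0 3 (p, q))"
  define cp where "cp = complex_of_real p"
  define cq where "cq = complex_of_real q"
  have hp: "cp * (1 - w * v) = w + v" using cpq(1)[OF Dw pq] unfolding cp_def v_def .
  have hq: "cq * (1 - w * v) = - \<i> * (w - v)" using cpq(2)[OF Dw pq] unfolding cq_def v_def .
  have i2: "\<i>^2 = -1" by simp
  have c0: "(1 + cp^2) * f20 + 2 * cp * cq * f11 + (1 + cq^2) * f02 = 0"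
    using arg_cong[OF L0[of p q], of complex_of_real] unfolding f20_def f11_def f02_def cp_def cq_def
    by simp
  have cp': "2 * cp * f20 + (1 + cp^2) * f30 + 2 * cq * f11 + 2 * cp * cq * f21 + (1 + cq^2) * f12 = 0"
    using arg_cong[OF Lp[of p q], of complex_of_real] unfolding f20_def f11_def f02_def f30_def f21_def f12_def cp_def cq_def
    by simp
  have cq': "(1 + cp^2) * f21 + 2 * cp * f11 + 2 * cp * cq * f12 + 2 * cq * f02 + (1 + cq^2) * f03 = 0"
    using arg_cong[OF Lq[of p q], of complex_of_real] unfolding f11_def f02_def f21_def f12_def f03_def cp_def cq_def
    by simp
  have l0: "((1 - w * v)^2 + (w+v)^2) * f20 + 2 * (w+v) * (- \<i> * (w - v)) * f11 + ((1 - w * v)^2 + (- \<i> * (w - v))^2) * f02 = 0"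
    using c0 hp hq by algebra
  have lp: "2 * (w+v) * (1 - w * v) * f20 + ((1 - w * v)^2 + (w+v)^2) * f30 + 2 * (- \<i> * (w - v)) * (1 - w * v) * f11
      + 2 * (w+v) * (- \<i> * (w - v)) * f21 + ((1 - w * v)^2 + (- \<i> * (w - v))^2) * f12 = 0"
    using cp' hp hq by algebra
  have lq: "((1 - w * v)^2 + (w+v)^2) * f21 + 2 * (w+v) * (1 - w * v) * f11 + 2 * (w+v) * (- \<i> * (w - v)) * f12
      + 2 * (- \<i> * (w - v)) * (1 - w * v) * f02 + ((1 - w * v)^2 + (- \<i> * (w - v))^2) * f03 = 0"
    using cq' hp hq by algebra
  have e: "complex_of_real (F 2 0 (Pmap w)) = f20" "complex_of_real (F 1 1 (Pmap w)) = f11"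
    "complex_of_real (F 0 2 (Pmap w)) = f02" "complex_of_real (F (Suc 2) 0 (Pmap w)) = f30"
    "complex_of_real (F 2 (Suc 0) (Pmap w)) = f21" "complex_of_real (F (Suc 1) 1 (Pmap w)) = f21"
    "complex_of_real (F (Suc 0) 2 (Pmap w)) = f12" "complex_of_real (F 1 (Suc 1) (Pmap w)) = f12"
    "complex_of_real (F 0 (Suc 2) (Pmap w)) = f03"
    by (simp_all add: pq f20_def f11_def f02_def f30_def f21_def f12_def f03_def numeral_2_eq_2 numeral_3_eq_3)
  have Dc: "1 - w * v \<noteq> 0" using Dc_nz[OF w] unfolding v_def .
  have Ec: "1 + w * v \<noteq> 0" using Ec_nz[of w] unfolding v_def .
  show ?thesis
    unfolding Hf_def[abs_def]
    apply (rule wd_mult wd_add wd_diff wd_const wd_cnj wd_id wd_power wd_inverse wd_F[OF F Dw] refl)+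
    using Dc Ec unfolding v_def apply simp
     apply (rule refl)
    unfolding e Dr_cnj v_def[symmetric]
    by (rule core1_E[OF Dc Ec l0 lp lq])
qed

definition Gf :: "(nat \<Rightarrow> nat \<Rightarrow> real \<times> real \<Rightarrow> real) \<Rightarrow> complex \<Rightarrow> complex" where
 "Gf F z = - z * of_real (F 0 0 (Pmap z)) + inverse (1 - z * cnj z) *
    ((of_real (F 1 0 (Pmap z)) + \<i> * of_real (F 0 1 (Pmap z)))
      + z^2 * (of_real (F 1 0 (Pmap z)) - \<i> * of_real (F 0 1 (Pmap z))))"

lemma Gf_wd:
  assumes F: "fam UNIV \<phi> F" and w: "w \<in> ball 0 1"
    and N: "(of_real (F 2 0 (Pmap w)) - of_real (F 0 2 (Pmap w)) + 2 * \<i> * of_real (F 1 1 (Pmap w)))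
       + 2 * w^2 * (of_real (F 2 0 (Pmap w)) + of_real (F 0 2 (Pmap w)))
       + w^4 * (of_real (F 2 0 (Pmap w)) - of_real (F 0 2 (Pmap w)) - 2 * \<i> * of_real (F 1 1 (Pmap w))) = 0"
  shows "wd (Gf F) w 0"
proof -
  have Dw: "Dr w \<noteq> 0" using Dr_pos[OF w] by simp
  have Dc: "1 - w * cnj w \<noteq> 0" using Dc_nz[OF w] .
  define f00 where "f00 = complex_of_real (F 0 0 (Pmap w))"
  define f10 where "f10 = complex_of_real (F 1 0 (Pmap w))"
  define f01 where "f01 = complex_of_real (F 0 1 (Pmap w))"
  define f20 where "f20 = complex_of_real (F 2 0 (Pmap w))"
  define f11 where "f11 = complex_of_real (F 1 1 (Pmap w))"
  define f02 where "f02 = complex_of_real (F 0 2 (Pmap w))"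
  have e: "complex_of_real (F (Suc 0) 0 (Pmap w)) = f10" "complex_of_real (F 0 (Suc 0) (Pmap w)) = f01"
    "complex_of_real (F (Suc 1) 0 (Pmap w)) = f20" "complex_of_real (F 1 (Suc 0) (Pmap w)) = f11"
    "complex_of_real (F (Suc 0) 1 (Pmap w)) = f11" "complex_of_real (F 0 (Suc 1) (Pmap w)) = f02"
    "complex_of_real (F 1 0 (Pmap w)) = f10" "complex_of_real (F 0 1 (Pmap w)) = f01"
    "complex_of_real (F 0 0 (Pmap w)) = f00"
    by (simp_all add: f00_def f10_def f01_def f20_def f11_def f02_def numeral_2_eq_2)
  have N': "(f20 - f02 + 2 * \<i> * f11) + 2 * w^2 * (f20 + f02) + w^4 * (f20 - f02 - 2 * \<i> * f11) = 0"
    using N unfolding f20_def f11_def f02_def .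
  define P where "P = (1 + w\<^sup>2) / (1 - w * cnj w)\<^sup>2"
  define Q where "Q = \<i> * (1 - w\<^sup>2) / (1 - w * cnj w)\<^sup>2"
  define R where "R = inverse (1 - w * cnj w)"
  define S where "S = - (0 - (w * 1 + 0 * cnj w)) / (1 - w * cnj w)\<^sup>2"
  have hP: "P * (1 - w * cnj w)^2 = 1 + w^2" unfolding P_def using Dc by simp
  have hQ: "Q * (1 - w * cnj w)^2 = \<i> * (1 - w^2)" unfolding Q_def using Dc by simp
  have hR: "R * (1 - w * cnj w) = 1" unfolding R_def by (rule left_inverse[OF Dc])
  have hS: "S * (1 - w * cnj w)^2 = w" unfolding S_def using Dc by simp
  have hP': "P = (1 + w^2) * R^2" unfolding P_def R_def by (simp add: divide_inverse power_inverse)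
  have hQ': "Q = \<i> * (1 - w^2) * R^2" unfolding Q_def R_def by (simp add: divide_inverse power_inverse)
  have hS': "S = w * R^2" unfolding S_def R_def by (simp add: divide_inverse power_inverse)
  have aux: "(2::nat) - 1 = 1" "complex_of_nat 2 = 2" by simp_all
  have i2: "\<i>^2 = -1" by simp
  show ?thesis
    unfolding Gf_def[abs_def]
    apply (rule wd_mult wd_add wd_diff wd_minus wd_const wd_cnj wd_id wd_power wd_inverse wd_F[OF F Dw] refl Dc)+
    unfolding Dr_cnj e P_def[symmetric] Q_def[symmetric] R_def[symmetric] S_def[symmetric] aux power_one_right
    unfolding hP' hQ' hS'
    using N' i2 by algebra
qed

lemma Dr_deriv: "(Dr has_derivative (\<lambda>h. - 2 * Re w * Re h - 2 * Im w * Im h)) (at w)"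
proof -
  have e: "Dr = (\<lambda>z. 1 - (Re z)^2 - (Im z)^2)" by (simp add: fun_eq_iff Dr_def)
  show ?thesis unfolding e by (auto intro!: derivative_eq_intros)
qed

lemma k_deriv:
  assumes F: "fam UNIV \<phi> F" and w: "w \<in> ball 0 1"
  shows "\<exists>k'. ((\<lambda>z. Dr z * F 0 0 (Pmap z)) has_derivative k') (at w)"
proof -
  have Dw: "Dr w \<noteq> 0" using Dr_pos[OF w] by simp
  show ?thesis using has_derivative_mult[OF Dr_deriv fam_chain[OF F UNIV_I Pm_deriv[OF Dw], of 0 0]] by blast
qed

lemma k_wd:
  assumes F: "fam UNIV \<phi> F" and w: "w \<in> ball 0 1"
  shows "wd (\<lambda>z. complex_of_real (Dr z * F 0 0 (Pmap z))) w (Gf F w)"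
proof -
  have Dw: "Dr w \<noteq> 0" using Dr_pos[OF w] by simp
  have Dc: "1 - w * cnj w \<noteq> 0" using Dc_nz[OF w] .
  have fe: "(\<lambda>z. complex_of_real (Dr z * F 0 0 (Pmap z))) = (\<lambda>z. (1 - z * cnj z) * complex_of_real (F 0 0 (Pmap z)))"
    by (simp add: fun_eq_iff Dr_cnj)
  define f00 where "f00 = complex_of_real (F 0 0 (Pmap w))"
  define f10 where "f10 = complex_of_real (F 1 0 (Pmap w))"
  define f01 where "f01 = complex_of_real (F 0 1 (Pmap w))"
  have e: "complex_of_real (F (Suc 0) 0 (Pmap w)) = f10" "complex_of_real (F 0 (Suc 0) (Pmap w)) = f01"
    "complex_of_real (F 1 0 (Pmap w)) = f10" "complex_of_real (F 0 1 (Pmap w)) = f01"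
    "complex_of_real (F 0 0 (Pmap w)) = f00"
    by (simp_all add: f00_def f10_def f01_def)
  define P where "P = (1 + w\<^sup>2) / (1 - w * cnj w)\<^sup>2"
  define Q where "Q = \<i> * (1 - w\<^sup>2) / (1 - w * cnj w)\<^sup>2"
  define R where "R = inverse (1 - w * cnj w)"
  have hR: "R * (1 - w * cnj w) = 1" unfolding R_def by (rule left_inverse[OF Dc])
  have hP': "P = (1 + w^2) * R^2" unfolding P_def R_def by (simp add: divide_inverse power_inverse)
  have hQ': "Q = \<i> * (1 - w^2) * R^2" unfolding Q_def R_def by (simp add: divide_inverse power_inverse)
  have i2: "\<i>^2 = -1" by simp
  show ?thesis
    unfolding fe
    apply (rule wd_mult wd_add wd_diff wd_minus wd_const wd_cnj wd_id wd_power wd_inverse wd_F[OF F Dw] refl)+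
    unfolding Dr_cnj e P_def[symmetric] Q_def[symmetric] Gf_def R_def[symmetric]
    unfolding hP' hQ'
    using hR i2 by algebra
qed

lemma fam_dx:
  assumes "fam UNIV f D"
  shows "((\<lambda>t. D i j (t, y)) has_real_derivative D (Suc i) j (x, y)) (at x)"
proof -
  have "((\<lambda>t. (t, y)) has_derivative (\<lambda>h. (h, 0))) (at x)"
    by (auto intro!: derivative_eq_intros)
  from fam_chain[OF assms UNIV_I this, of i j]
  have "((\<lambda>t. D i j (t, y)) has_derivative (\<lambda>h. D (Suc i) j (x, y) * h)) (at x)" by simp
  then show ?thesis unfolding has_field_derivative_def by assumption
qed

lemma fam_dy:
  assumes "fam UNIV f D"
  shows "((\<lambda>t. D i j (x, t)) has_real_derivative D i (Suc j) (x, y)) (at y)"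
proof -
  have "((\<lambda>t. (x, t)) has_derivative (\<lambda>h. (0, h))) (at y)"
    by (auto intro!: derivative_eq_intros)
  from fam_chain[OF assms UNIV_I this, of i j]
  have "((\<lambda>t. D i j (x, t)) has_derivative (\<lambda>h. D i (Suc j) (x, y) * h)) (at y)" by simp
  then show ?thesis unfolding has_field_derivative_def by assumption
qed

lemma L_derivs:
  assumes F: "fam UNIV \<phi> F"
    and L0: "\<And>p q. (1 + p^2) * F 2 0 (p, q) + 2 * p * q * F 1 1 (p, q) + (1 + q^2) * F 0 2 (p, q) = 0"
  shows "2 * p * F 2 0 (p, q) + (1 + p^2) * F 3 0 (p, q) + 2 * q * F 1 1 (p, q)
              + 2 * p * q * F 2 1 (p, q) + (1 + q^2) * F 1 2 (p, q) = 0"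
    and "(1 + p^2) * F 2 1 (p, q) + 2 * p * F 1 1 (p, q) + 2 * p * q * F 1 2 (p, q)
              + 2 * q * F 0 2 (p, q) + (1 + q^2) * F 0 3 (p, q) = 0"
proof -
  have a: "((\<lambda>t. (1 + t^2) * F 2 0 (t, q) + 2 * t * q * F 1 1 (t, q) + (1 + q^2) * F 0 2 (t, q)) has_real_derivative
      (2 * p * F 2 0 (p, q) + (1 + p^2) * F 3 0 (p, q) + 2 * q * F 1 1 (p, q)
              + 2 * p * q * F 2 1 (p, q) + (1 + q^2) * F 1 2 (p, q))) (at p)"
    using fam_dx[OF F, of 2 0 q p] fam_dx[OF F, of 1 1 q p] fam_dx[OF F, of 0 2 q p]
    by (auto intro!: derivative_eq_intros simp: numeral_3_eq_3 numeral_2_eq_2 algebra_simps)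
  have b: "((\<lambda>t. (1 + t^2) * F 2 0 (t, q) + 2 * t * q * F 1 1 (t, q) + (1 + q^2) * F 0 2 (t, q)) has_real_derivative 0) (at p)"
    unfolding L0 by simp
  show "2 * p * F 2 0 (p, q) + (1 + p^2) * F 3 0 (p, q) + 2 * q * F 1 1 (p, q)
              + 2 * p * q * F 2 1 (p, q) + (1 + q^2) * F 1 2 (p, q) = 0"
    using DERIV_unique[OF a b] .
  have c: "((\<lambda>t. (1 + p^2) * F 2 0 (p, t) + 2 * p * t * F 1 1 (p, t) + (1 + t^2) * F 0 2 (p, t)) has_real_derivative
      ((1 + p^2) * F 2 1 (p, q) + 2 * p * F 1 1 (p, q) + 2 * p * q * F 1 2 (p, q)
              + 2 * q * F 0 2 (p, q) + (1 + q^2) * F 0 3 (p, q))) (at q)"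
    using fam_dy[OF F, of 2 0 p q] fam_dy[OF F, of 1 1 p q] fam_dy[OF F, of 0 2 p q]
    by (auto intro!: derivative_eq_intros simp: numeral_3_eq_3 numeral_2_eq_2 algebra_simps)
  have d: "((\<lambda>t. (1 + p^2) * F 2 0 (p, t) + 2 * p * t * F 1 1 (p, t) + (1 + t^2) * F 0 2 (p, t)) has_real_derivative 0) (at q)"
    unfolding L0 by simp
  show "(1 + p^2) * F 2 1 (p, q) + 2 * p * F 1 1 (p, q) + 2 * p * q * F 1 2 (p, q)
              + 2 * q * F 0 2 (p, q) + (1 + q^2) * F 0 3 (p, q) = 0"
    using DERIV_unique[OF c d] .
qed

lemma vanish:
  assumes F: "fam UNIV \<phi> F" and V: "open V" and z: "z \<in> V" and Z: "\<And>z. z \<in> V \<Longrightarrow> F i j z = 0"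
  shows "F (Suc i) j z = 0" "F i (Suc j) z = 0"
proof -
  obtain x y where xy: "z = (x, y)" by (cases z)
  have o1: "open {t. (t, y) \<in> V}"
  proof -
    have "open ((\<lambda>t. (t, y)) -` V)"
      by (rule continuous_open_vimage[OF V]) (intro continuous_intros)
    then show ?thesis by (simp add: vimage_def)
  qed
  have o2: "open {t. (x, t) \<in> V}"
  proof -
    have "open ((\<lambda>t. (x, t)) -` V)"
      by (rule continuous_open_vimage[OF V]) (intro continuous_intros)
    then show ?thesis by (simp add: vimage_def)
  qed
  have "((\<lambda>t. F i j (t, y)) has_real_derivative 0) (at x)"
    by (rule has_field_derivative_transform_within_open[OF DERIV_const o1]) (use z xy Z in auto)
  from DERIV_unique[OF fam_dx[OF F, of i j y x] this] show "F (Suc i) j z = 0" using xy by simp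
  have "((\<lambda>t. F i j (x, t)) has_real_derivative 0) (at y)"
    by (rule has_field_derivative_transform_within_open[OF DERIV_const o2]) (use z xy Z in auto)
  from DERIV_unique[OF fam_dy[OF F, of i j x y] this] show "F i (Suc j) z = 0" using xy by simp
qed

lemma Pmap_surj: "\<exists>w \<in> ball 0 1. Pmap w = z"
proof -
  obtain p q where z: "z = (p, q)" by (cases z)
  define W where "W = sqrt (1 + p^2 + q^2)"
  have W2: "W^2 = 1 + p^2 + q^2" unfolding W_def by (simp add: add_nonneg_nonneg)
  have W1: "W \<ge> 1" unfolding W_def by (simp add: add_nonneg_nonneg)
  define w where "w = Complex (p / (1 + W)) (q / (1 + W))"
  have n2: "(Re w)^2 + (Im w)^2 = (W - 1) / (W + 1)"
  proof -
    have "(Re w)^2 + (Im w)^2 = (p^2 + q^2) / (1 + W)^2" unfolding w_def by (simp add: power_divide add_divide_distrib)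
    also have "p^2 + q^2 = (W - 1) * (W + 1)" using W2 by (simp add: algebra_simps power2_eq_square)
    also have "(W - 1) * (W + 1) / (1 + W)^2 = (W - 1) / (W + 1)"
    proof -
      have h: "W + 1 \<noteq> 0" using W1 by simp
      have "(1 + W)^2 = (W + 1) * (W + 1)" by (simp add: power2_eq_square add.commute)
      then show ?thesis by (simp only:) (rule mult_divide_mult_cancel_right[OF h])
    qed
    finally show ?thesis .
  qed
  have "cmod w < 1"
  proof -
    have "(cmod w)^2 < 1" unfolding cmod_power2 n2 using W1 by simp
    then show ?thesis by (simp add: power_less_one_iff abs_square_less_1)
  qed
  moreover have "Dr w = 2 / (W + 1)"
    unfolding Dr_def using n2 W1 by (simp add: field_simps)
  then have "Pmap w = (p, q)" unfolding Pmap_def w_def using W1 by (simp add: field_simps)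
  ultimately show ?thesis using z by auto
qed

lemma Pmap_cont: "continuous_on (ball 0 1) Pmap"
proof -
  have "\<And>w. w \<in> ball 0 1 \<Longrightarrow> Dr w \<noteq> 0" using Dr_pos by fastforce
  then show ?thesis unfolding Pmap_def Dr_def
    by (intro continuous_intros) auto
qed

lemma wd_holo_on: "(\<And>w. w \<in> S \<Longrightarrow> wd f w 0) \<Longrightarrow> f holomorphic_on S"
  unfolding holomorphic_on_def using wd_holo field_differentiable_at_within by blast

lemma UC:
  assumes F: "fam UNIV \<phi> F"
    and L0: "\<And>p q. (1 + p^2) * F 2 0 (p, q) + 2 * p * q * F 1 1 (p, q) + (1 + q^2) * F 0 2 (p, q) = 0"
    and V: "open V" "V \<noteq> {}" and Z: "\<And>z. z \<in> V \<Longrightarrow> \<phi> z = 0"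
  shows "\<phi> z = 0"
proof -
  note Lp = L_derivs(1)[OF F L0] and Lq = L_derivs(2)[OF F L0]
  have phiF: "\<phi> z = F 0 0 z" for z using F unfolding fam_def by (metis UNIV_I)
  have v00: "F 0 0 z = 0" if "z \<in> V" for z using Z that phiF by simp
  have v10: "F 1 0 z = 0" if "z \<in> V" for z using vanish(1)[OF F V(1) that v00] by simp
  have v01: "F 0 1 z = 0" if "z \<in> V" for z using vanish(2)[OF F V(1) that v00] by simp
  have v20: "F 2 0 z = 0" if "z \<in> V" for z using vanish(1)[OF F V(1) that v10] by (simp add: numeral_2_eq_2)
  have v11: "F 1 1 z = 0" if "z \<in> V" for z using vanish(2)[OF F V(1) that v10] by simp
  have v02: "F 0 2 z = 0" if "z \<in> V" for z using vanish(2)[OF F V(1) that v01] by (simp add: numeral_2_eq_2)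
  define s where "s = ball 0 1 \<inter> Pmap -` V"
  have os: "open s" unfolding s_def using Pmap_cont V(1) continuous_on_open_vimage[of "ball 0 1" Pmap]
    by (metis Int_commute open_ball)
  have ss: "s \<subseteq> ball 0 1" unfolding s_def by auto
  obtain z0 where z0: "z0 \<in> V" using V(2) by auto
  obtain w0 where w0: "w0 \<in> ball 0 1" "Pmap w0 = z0" using Pmap_surj by blast
  have w0s: "w0 \<in> s" unfolding s_def using w0 z0 by auto
  then have sne: "s \<noteq> {}" by auto
  have holH: "Hf F holomorphic_on ball 0 1" by (rule wd_holo_on) (rule Hf_wd[OF F _ L0 Lp Lq])
  have H0: "Hf F w = 0" if "w \<in> ball 0 1" for w
  proof -
    have "Hf F w = (\<lambda>_. 0) w"
    proof (rule analytic_continuation_open[OF os open_ball sne connected_ball ss holH holomorphic_on_const _ that])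
      fix z assume "z \<in> s"
      then have "Pmap z \<in> V" unfolding s_def by auto
      then show "Hf F z = 0" unfolding Hf_def using v20 v11 v02 by simp
    qed
    then show ?thesis by simp
  qed
  have N0: "(of_real (F 2 0 (Pmap w)) - of_real (F 0 2 (Pmap w)) + 2 * \<i> * of_real (F 1 1 (Pmap w)))
       + 2 * w^2 * (of_real (F 2 0 (Pmap w)) + of_real (F 0 2 (Pmap w)))
       + w^4 * (of_real (F 2 0 (Pmap w)) - of_real (F 0 2 (Pmap w)) - 2 * \<i> * of_real (F 1 1 (Pmap w))) = 0"
    if w: "w \<in> ball 0 1" for w
  proof -
    have nz: "inverse ((1 - w * cnj w)^3 * (1 + w * cnj w)) \<noteq> 0" using Dc_nz[OF w] Ec_nz[of w] by simp
    have "((of_real (F 2 0 (Pmap w)) - of_real (F 0 2 (Pmap w)) - 2 * \<i> * of_real (F 1 1 (Pmap w)))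
    + 2 * (cnj w)^2 * (of_real (F 2 0 (Pmap w)) + of_real (F 0 2 (Pmap w)))
    + (cnj w)^4 * (of_real (F 2 0 (Pmap w)) - of_real (F 0 2 (Pmap w)) + 2 * \<i> * of_real (F 1 1 (Pmap w)))) = 0"
      using H0[OF w] nz unfolding Hf_def by simp
    from arg_cong[OF this, of cnj] show ?thesis by simp
  qed
  have holG: "Gf F holomorphic_on ball 0 1" by (rule wd_holo_on) (rule Gf_wd[OF F _ N0])
  have G0: "Gf F w = 0" if "w \<in> ball 0 1" for w
  proof -
    have "Gf F w = (\<lambda>_. 0) w"
    proof (rule analytic_continuation_open[OF os open_ball sne connected_ball ss holG holomorphic_on_const _ that])
      fix z assume "z \<in> s"
      then have "Pmap z \<in> V" unfolding s_def by auto
      then show "Gf F z = 0" unfolding Gf_def using v00 v10 v01 by simp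
    qed
    then show ?thesis by simp
  qed
  define k where "k = (\<lambda>z. Dr z * F 0 0 (Pmap z))"
  have kd: "(k has_derivative (\<lambda>h. 0)) (at w within ball 0 1)" if w: "w \<in> ball 0 1" for w
  proof -
    obtain k' where k': "(k has_derivative k') (at w)" using k_deriv[OF F w] unfolding k_def by blast
    have "wd (\<lambda>z. complex_of_real (k z)) w 0" using k_wd[OF F w] G0[OF w] unfolding k_def by simp
    then have "k' h = 0" for h using wd_real_zero[OF k'] by blast
    then have "(k has_derivative (\<lambda>h. 0)) (at w)" using k' by (metis has_derivative_eq_rhs ext)
    then show ?thesis by (rule has_derivative_at_withinI)
  qed
  obtain c where c: "\<And>x. x \<in> ball 0 1 \<Longrightarrow> k x = c"
    using has_derivative_zero_constant[OF convex_ball kd] by blast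
  have "k w0 = 0" unfolding k_def using w0 z0 v00 by simp
  then have k0: "k x = 0" if "x \<in> ball 0 1" for x using c[OF that] c[OF w0(1)] by simp
  obtain w where w: "w \<in> ball 0 1" "Pmap w = z" using Pmap_surj by blast
  have "Dr w * F 0 0 z = 0" using k0[OF w(1)] w(2) unfolding k_def by simp
  then show ?thesis using Dr_pos[OF w(1)] phiF by simp
qed

lemma hess_dichotomy:
  fixes p q r s t :: real
  assumes "(1 + q^2) * r - 2 * p * q * s + (1 + p^2) * t = 0"
    and "\<not> (r = 0 \<and> s = 0 \<and> t = 0)"
  shows "r * t - s^2 \<noteq> 0"
proof
  assume d: "r * t - s^2 = 0"
  show False
  proof (cases "r = 0")
    case True
    with d have "s = 0" by simp
    with True assms show False by (smt (verit) zero_le_power2 mult_eq_0_iff)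
  next
    case False
    have "r * ((1 + q^2) * r - 2 * p * q * s + (1 + p^2) * t) = 0" using assms(1) by simp
    then have "(1 + q^2) * r^2 - 2 * p * q * s * r + (1 + p^2) * s^2 = 0"
      using d by (simp add: algebra_simps power2_eq_square)
    then have "r^2 + s^2 + (q * r - p * s)^2 = 0"
      by (simp add: algebra_simps power2_eq_square)
    then have "r^2 = 0" by (smt (verit) zero_le_power2)
    then have "r = 0" by simp
    with False show False by simp
  qed
qed

lemma inv2:
  fixes r s t :: real
  assumes d: "r * t - s^2 \<noteq> 0"
  shows "(\<lambda>v. (r * fst v + s * snd v, s * fst v + t * snd v)) \<circ>
     (\<lambda>(a::real, b::real). ((t * a - s * b) / (r * t - s^2), (r * b - s * a) / (r * t - s^2))) = id"
proof (rule ext)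
  fix v :: "real \<times> real"
  obtain a b where v: "v = (a, b)" by (cases v)
  have 1: "r * ((t * a - s * b) / (r * t - s^2)) + s * ((r * b - s * a) / (r * t - s^2))
      = (r * (t * a - s * b) + s * (r * b - s * a)) / (r * t - s^2)"
    by (simp add: add_divide_distrib)
  have 2: "s * ((t * a - s * b) / (r * t - s^2)) + t * ((r * b - s * a) / (r * t - s^2))
      = (s * (t * a - s * b) + t * (r * b - s * a)) / (r * t - s^2)"
    by (simp add: add_divide_distrib)
  have 3: "r * (t * a - s * b) + s * (r * b - s * a) = a * (r * t - s^2)"
    "s * (t * a - s * b) + t * (r * b - s * a) = b * (r * t - s^2)"
    by (simp_all add: algebra_simps power2_eq_square)
  show "((\<lambda>v. (r * fst v + s * snd v, s * fst v + t * snd v)) \<circ>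
     (\<lambda>(a::real, b::real). ((t * a - s * b) / (r * t - s^2), (r * b - s * a) / (r * t - s^2)))) v = id v"
    unfolding v o_def case_prod_conv id_def fst_conv snd_conv 1 2 3 using d by simp
qed

theorem proposition8:
  fixes \<phi> :: "real \<times> real \<Rightarrow> real"
    and u :: "real \<times> real \<Rightarrow> real"
    and \<Omega> :: "(real \<times> real) set"
  assumes "smooth_on_R2 UNIV \<phi>"
    and "is_MSE_symmetry \<phi>"
    and "\<exists>z. \<phi> z \<noteq> 0"
    and "open \<Omega>" and "connected \<Omega>"
    and "smooth_on_R2 \<Omega> u"
    and "\<forall>z\<in>\<Omega>. MSE (dP u z) (dQ u z) (dP (dP u) z) (dQ (dP u) z) (dQ (dQ u) z) = 0"
    and "\<forall>z\<in>\<Omega>. \<phi> (dP u z, dQ u z) = 0"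
  shows "\<exists>a b c. \<forall>x y. (x, y) \<in> \<Omega> \<longrightarrow> u (x, y) = a * x + b * y + c"
proof -
  obtain F where F: "fam UNIV \<phi> F" using smooth_fam[OF assms(1)] by blast
  obtain G where G: "fam \<Omega> u G" using smooth_fam[OF assms(6)] by blast
  note e = fam_second[OF G assms(4)]
  have L: "\<And>p q. (1 + p^2) * F 2 0 (p, q) + 2 * p * q * F 1 1 (p, q) + (1 + q^2) * F 0 2 (p, q) = 0"
    using sym_L[OF F assms(2)] by blast
  define g where "g = (\<lambda>z. (G 1 0 z, G 0 1 z))"
  have gder: "(g has_derivative (\<lambda>v. (G 2 0 z * fst v + G 1 1 z * snd v, G 1 1 z * fst v + G 0 2 z * snd v))) (at z)"
    if "z \<in> \<Omega>" for z
    unfolding g_def using has_derivative_Pair[OF fam_der[OF G that, of 1 0] fam_der[OF G that, of 0 1]]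
    by (simp add: case_prod_beta numeral_2_eq_2)
  show ?thesis
  proof (cases "\<forall>z\<in>\<Omega>. G 2 0 z = 0 \<and> G 1 1 z = 0 \<and> G 0 2 z = 0")
    case True
    show ?thesis
    proof (cases "\<Omega> = {}")
      case True then show ?thesis by auto
    next
      case False
      then obtain z0 where z0: "z0 \<in> \<Omega>" by auto
      have g0: "(g has_derivative (\<lambda>x. 0)) (at z)" if "z \<in> \<Omega>" for z
        using gder[OF that] True that by (simp add: case_prod_beta zero_prod_def)
      have gc: "g z = g z0" if "z \<in> \<Omega>" for z
        by (rule has_derivative_zero_unique_connected[OF assms(4,5) g0 that z0])
      define a where "a = G 1 0 z0"
      define b where "b = G 0 1 z0"
      have ab: "G 1 0 z = a" "G 0 1 z = b" if "z \<in> \<Omega>" for z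
        using gc[OF that] unfolding g_def a_def b_def by auto
      define k where "k = (\<lambda>z. u z - a * fst z - b * snd z)"
      have k0: "(k has_derivative (\<lambda>x. 0)) (at z)" if "z \<in> \<Omega>" for z
      proof -
        have d0: "(G 0 0 has_derivative (\<lambda>(h, k). a * h + b * k)) (at z)"
          using fam_der[OF G that, of 0 0] ab[OF that] by simp
        have "(u has_derivative (\<lambda>(h, k). a * h + b * k)) (at z)"
          by (rule has_derivative_transform_within_open[OF d0 assms(4) that]) (use G in \<open>auto simp: fam_def\<close>)
        then have "(k has_derivative (\<lambda>v. (\<lambda>(h, k). a * h + b * k) v - a * fst v - b * snd v)) (at z)"
          unfolding k_def by (auto intro!: derivative_eq_intros)
        then show ?thesis by (simp add: case_prod_beta)
      qed
      have "u z = a * fst z + b * snd z + k z0" if "z \<in> \<Omega>" for z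
        using has_derivative_zero_unique_connected[OF assms(4,5) k0 that z0] unfolding k_def by simp
      then show ?thesis by fastforce
    qed
  next
    case False
    then obtain z0 where z0: "z0 \<in> \<Omega>" and nz: "\<not> (G 2 0 z0 = 0 \<and> G 1 1 z0 = 0 \<and> G 0 2 z0 = 0)"
      by blast
    let ?r = "G 2 0 z0" and ?s = "G 1 1 z0" and ?t = "G 0 2 z0"
    have "MSE (G 1 0 z0) (G 0 1 z0) ?r ?s ?t = 0"
      using bspec[OF assms(7) z0] unfolding e[OF z0] .
    then have det: "?r * ?t - ?s^2 \<noteq> 0"
      using hess_dichotomy nz unfolding MSE_def by blast
    define g' where "g' = (\<lambda>(a::real, b::real). ((?t * a - ?s * b) / (?r * ?t - ?s^2), (?r * b - ?s * a) / (?r * ?t - ?s^2)))"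
    have bl: "bounded_linear g'"
      unfolding g'_def linear_conv_bounded_linear[symmetric]
      by (rule linearI) (auto simp: case_prod_beta algebra_simps add_divide_distrib diff_divide_distrib)
    have inv: "(\<lambda>v. (?r * fst v + ?s * snd v, ?s * fst v + ?t * snd v)) \<circ> g' = id"
      using inv2[OF det] unfolding g'_def .
    have contg: "continuous_on \<Omega> g"
      using gder by (meson continuous_at_imp_continuous_on has_derivative_continuous)
    have "g z0 \<in> interior (g ` \<Omega>)"
      by (rule sussmann_open_mapping[OF assms(4) contg z0 gder[OF z0] bl inv order_refl])
        (simp add: interior_open assms(4) z0)
    then have ne: "interior (g ` \<Omega>) \<noteq> {}" by auto
    have "\<phi> z = 0" if "z \<in> interior (g ` \<Omega>)" for z
    proof -
      from that obtain y where "y \<in> \<Omega>" "z = g y" using interior_subset by blast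
      then show ?thesis using assms(8) e unfolding g_def by auto
    qed
    then have "\<phi> z = 0" for z by (rule UC[OF F L open_interior ne])
    with assms(3) show ?thesis by blast
  qed
qed

end
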